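(* Let $\mathbb{Z}$ be the infinite line graph with unit weights (vertex set $\mathbb{Z}$, $x\sim y$ iff $|x-y|=1$, $\mu_x=1$, $\omega_{xy}=1$), so that $\Delta u(x)=u(x+1)+u(x-1)-2u(x)$. For every $\epsilon>0$ there exists a function $u:\mathbb{R}\times\mathbb{Z}\to\mathbb{R}$ with $u(\cdot,x)\in C^2(\mathbb{R})$ for each $x$, satisfying $\partial_t^2u(t,x)=\Delta u(t,x)$ for all $(t,x)\in\mathbb{R}\times\mathbb{Z}$, with $u(0,x)=\partial_tu(0,x)=0$ for all $x\in\mathbb{Z}$, such that $u\not\equiv0$, $u$ is not analytic in time (specifically $t\mapsto u(t,0)$ is not real analytic on $\mathbb{R}$), and for every $t\in\mathbb{R}$, $$\lim_{|x|\to\infty}|u(t,x)|\,e^{-(2+\epsilon)|x|\ln|x|}=0.$$ *)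

theory Defs
  imports "HOL-Analysis.Analysis"
begin

definition line_laplacian :: "(int \<Rightarrow> real) \<Rightarrow> int \<Rightarrow> real" where
  "line_laplacian v x = v (x + 1) + v (x - 1) - 2 * v x"

definition real_analytic_on :: "(real \<Rightarrow> real) \<Rightarrow> real set \<Rightarrow> bool" where
  "real_analytic_on f S \<longleftrightarrow>
     (\<forall>x\<in>S. \<exists>r>0. \<exists>c :: nat \<Rightarrow> real.
        \<forall>y. \<bar>y - x\<bar> < r \<longrightarrow> (\<lambda>n. c n * (y - x) ^ n) sums f y)"

end

theory Submission
  imports Defs "HOL-Computational_Algebra.Polynomial" "HOL-Real_Asymp.Real_Asymp"
begin

primrec P :: "nat \<Rightarrow> real poly" where
  "P 0 = 1"
| "P (Suc m) = [:0,0,1:] * (P m - pderiv (P m))"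

definition phi :: "nat \<Rightarrow> real \<Rightarrow> real" where
  "phi m t = (if t > 0 then poly (P m) (inverse t) * exp (- inverse t) else 0)"

lemma poly_exp_limit: fixes Q :: "real poly" shows "((\<lambda>s. poly Q s * exp (-s)) \<longlongrightarrow> 0) at_top"
proof -
  have "((\<lambda>s. \<Sum>i\<le>degree Q. coeff Q i * (s^i / exp s)) \<longlongrightarrow> (\<Sum>i\<le>degree Q. coeff Q i * 0)) at_top"
    by (intro tendsto_sum tendsto_mult tendsto_const tendsto_power_div_exp_0)
  moreover have "\<And>s. poly Q s * exp (-s) = (\<Sum>i\<le>degree Q. coeff Q i * (s^i / exp s))"
    by (simp add: poly_altdef sum_distrib_right exp_minus divide_inverse mult.assoc)
  ultimately show ?thesis by simp
qed

lemma poly_exp_right: fixes Q :: "real poly" shows "((\<lambda>y. poly Q (inverse y) * exp (- inverse y)) \<longlongrightarrow> 0) (at_right (0::real))"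
  using filterlim_compose[OF poly_exp_limit filterlim_inverse_at_top_right] by simp

lemma ev_left: "eventually (\<lambda>y::real. y < 0) (at_left 0)"
  unfolding eventually_at_left_field by (intro exI[of _ "-1"]) auto

lemma phi_deriv: "(phi m has_real_derivative phi (Suc m) t) (at t)"
proof (cases "t > 0")
  case True
  have d1: "((\<lambda>y. poly (P m) (inverse y)) has_real_derivative
      poly (pderiv (P m)) (inverse t) * (- (inverse t ^ Suc (Suc 0)))) (at t)"
    using DERIV_chain2[OF poly_DERIV DERIV_inverse[of t UNIV]] True by auto
  have d2: "((\<lambda>y. exp (- inverse y)) has_real_derivative
      exp (- inverse t) * (- (- (inverse t ^ Suc (Suc 0))))) (at t)"
    using DERIV_chain2[OF DERIV_exp DERIV_minus[OF DERIV_inverse[of t UNIV]]] True by auto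
  have "((\<lambda>y. poly (P m) (inverse y) * exp (- inverse y)) has_real_derivative phi (Suc m) t) (at t)"
    using DERIV_mult[OF d1 d2] True
    by (simp add: phi_def poly_mult poly_diff algebra_simps power2_eq_square)
  then show ?thesis
    by (rule has_field_derivative_transform_within_open[where S="{0<..}"]) (use True in \<open>auto simp: phi_def\<close>)
next
  case False
  show ?thesis
  proof (cases "t < 0")
    case True
    have "((\<lambda>y. 0) has_real_derivative phi (Suc m) t) (at t)"
      using True by (simp add: phi_def)
    then show ?thesis
      by (rule has_field_derivative_transform_within_open[where S="{..<0}"]) (use True in \<open>auto simp: phi_def\<close>)
  next
    case False
    with \<open>\<not> t > 0\<close> have t0: "t = 0" by simp
    have L: "((\<lambda>y. (phi m y - phi m 0) / (y - 0)) \<longlongrightarrow> 0) (at_left 0)"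
      by (rule tendsto_eventually) (use ev_left in \<open>eventually_elim, simp add: phi_def\<close>)
    have R: "((\<lambda>y. (phi m y - phi m 0) / (y - 0)) \<longlongrightarrow> 0) (at_right 0)"
    proof (rule Lim_transform_eventually[OF poly_exp_right[of "[:0,1:] * P m"]])
      show "\<forall>\<^sub>F y in at_right 0. poly ([:0, 1:] * P m) (inverse y) * exp (- inverse y) =
         (phi m y - phi m 0) / (y - 0)"
        using eventually_at_right_less[of "0::real"]
        by eventually_elim (simp add: phi_def poly_mult divide_inverse)
    qed
    have "((\<lambda>y. (phi m y - phi m 0) / (y - 0)) \<longlongrightarrow> 0) (at 0)"
      using L R filterlim_at_split by blast
    then show ?thesis
      using t0 by (simp add: has_field_derivative_iff phi_def)
  qed
qed


definition pn :: "real poly \<Rightarrow> real" where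
  "pn p = (\<Sum>i\<le>degree p. \<bar>coeff p i\<bar>)"

lemma pn_ext: "degree p \<le> N \<Longrightarrow> pn p = (\<Sum>i\<le>N. \<bar>coeff p i\<bar>)"
  unfolding pn_def
  by (rule sum.mono_neutral_left) (auto simp: coeff_eq_0)

lemma pn_nonneg: "pn p \<ge> 0"
  unfolding pn_def by (simp add: sum_nonneg)

lemma poly_bound:
  assumes "0 \<le> s" "degree p \<le> N"
  shows "\<bar>poly p s\<bar> \<le> pn p * max 1 s ^ N"
proof -
  have "\<bar>poly p s\<bar> = \<bar>\<Sum>i\<le>N. coeff p i * s ^ i\<bar>"
    by (simp add: poly_altdef) (rule arg_cong[where f=abs], rule sum.mono_neutral_left, use assms in \<open>auto simp: coeff_eq_0\<close>)
  also have "\<dots> \<le> (\<Sum>i\<le>N. \<bar>coeff p i\<bar> * max 1 s ^ N)"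
  proof (rule order.trans[OF sum_abs], rule sum_mono)
    fix i assume "i \<in> {..N}"
    have "s ^ i \<le> max 1 s ^ i" using assms by (intro power_mono) auto
    also have "\<dots> \<le> max 1 s ^ N" using \<open>i \<in> {..N}\<close> by (intro power_increasing) auto
    finally show "\<bar>coeff p i * s ^ i\<bar> \<le> \<bar>coeff p i\<bar> * max 1 s ^ N"
      using assms by (simp add: abs_mult mult_left_mono)
  qed
  also have "\<dots> = pn p * max 1 s ^ N"
    using assms by (simp add: pn_ext sum_distrib_right)
  finally show ?thesis .
qed

lemma pn_diff: "pn (p - q) \<le> pn p + pn q"
proof -
  define N where "N = max (degree p) (degree q)"
  have "pn (p - q) = (\<Sum>i\<le>N. \<bar>coeff p i - coeff q i\<bar>)"
    by (subst pn_ext[of _ N]) (auto simp: N_def degree_diff_le_max)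
  also have "\<dots> \<le> (\<Sum>i\<le>N. \<bar>coeff p i\<bar> + \<bar>coeff q i\<bar>)"
    by (intro sum_mono) auto
  also have "\<dots> = pn p + pn q"
    using pn_ext[of p N] pn_ext[of q N] by (simp add: sum.distrib N_def)
  finally show ?thesis .
qed

lemma pn_pCons0: "pn (pCons 0 q) = pn q"
proof -
  have "pn (pCons 0 q) = (\<Sum>i\<le>Suc (degree q). \<bar>coeff (pCons 0 q) i\<bar>)"
    by (rule pn_ext) (simp add: degree_pCons_le)
  also have "\<dots> = pn q"
    by (subst sum.atMost_Suc_shift) (simp add: pn_def)
  finally show ?thesis .
qed

lemma pn_pderiv: "pn (pderiv p) \<le> real (degree p) * pn p"
proof -
  define d where "d = degree p"
  have "pn (pderiv p) = (\<Sum>i\<le>d. \<bar>coeff (pderiv p) i\<bar>)"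
    by (rule pn_ext) (use degree_pderiv[of p] in \<open>auto simp: d_def\<close>)
  also have "\<dots> \<le> (\<Sum>i\<le>d. real d * \<bar>coeff p (Suc i)\<bar>)"
  proof (rule sum_mono)
    fix i assume "i \<in> {..d}"
    show "\<bar>coeff (pderiv p) i\<bar> \<le> real d * \<bar>coeff p (Suc i)\<bar>"
    proof (cases "Suc i \<le> d")
      case True
      then show ?thesis by (simp add: coeff_pderiv abs_mult mult_right_mono)
    next
      case False
      then have "coeff p (Suc i) = 0" by (intro coeff_eq_0) (simp add: d_def)
      then show ?thesis by (simp add: coeff_pderiv)
    qed
  qed
  also have "\<dots> = real d * (\<Sum>i\<le>d. \<bar>coeff p (Suc i)\<bar>)"
    by (simp add: sum_distrib_left)
  also have "(\<Sum>i\<le>d. \<bar>coeff p (Suc i)\<bar>) \<le> pn p"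
  proof -
    have "(\<Sum>i\<le>d. \<bar>coeff p (Suc i)\<bar>) \<le> \<bar>coeff p 0\<bar> + (\<Sum>i\<le>d. \<bar>coeff p (Suc i)\<bar>)" by simp
    also have "\<dots> = (\<Sum>i\<le>Suc d. \<bar>coeff p i\<bar>)" by (simp only: sum.atMost_Suc_shift)
    also have "\<dots> = pn p" by (rule pn_ext[symmetric]) (simp add: d_def)
    finally show ?thesis .
  qed
  hence "real d * (\<Sum>i\<le>d. \<bar>coeff p (Suc i)\<bar>) \<le> real d * pn p"
    by (intro mult_left_mono) auto
  finally show ?thesis by (simp add: d_def)
qed

lemma degree_P: "degree (P m) \<le> 2 * m"
proof (induction m)
  case 0 then show ?case by simp
next
  case (Suc m)
  have "degree (P m - pderiv (P m)) \<le> 2 * m"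
    using Suc degree_pderiv[of "P m"] degree_diff_le_max[of "P m" "pderiv (P m)"] by linarith
  then show ?case
    using degree_mult_le[of "[:0,0,1:]" "P m - pderiv (P m)"] by simp
qed

lemma pn_P_step: "pn (P (Suc m)) \<le> (2 * real m + 1) * pn (P m)"
proof -
  have "[:0,0,1:] * q = pCons 0 (pCons 0 q)" for q :: "real poly"
    by simp
  hence "pn (P (Suc m)) = pn (P m - pderiv (P m))" by (simp add: pn_pCons0)
  also have "\<dots> \<le> pn (P m) + real (degree (P m)) * pn (P m)"
    using pn_diff pn_pderiv by (meson add_left_mono order.trans)
  also have "\<dots> \<le> pn (P m) + (2 * real m) * pn (P m)"
    using degree_P[of m] pn_nonneg[of "P m"] by (intro add_left_mono mult_right_mono) auto
  finally show ?thesis by (simp add: algebra_simps)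
qed

lemma pn_P: "pn (P m) \<le> (2 * real m + 1) ^ m"
proof (induction m)
  case 0 then show ?case by (simp add: pn_def)
next
  case (Suc m)
  have "pn (P (Suc m)) \<le> (2 * real m + 1) * (2 * real m + 1) ^ m"
    using pn_P_step[of m] Suc by (meson mult_left_mono order.trans le_add_same_cancel2 mult_nonneg_nonneg of_nat_0_le_iff zero_le_one add_nonneg_nonneg zero_le_numeral)
  also have "\<dots> \<le> (2 * real (Suc m) + 1) ^ Suc m"
    by (simp only: power_Suc[symmetric]) (intro power_mono, auto)
  finally show ?case .
qed

lemma phi_bound: "\<bar>phi m t\<bar> \<le> (2 * real m + 1) ^ m * max 1 (inverse t) ^ (2 * m)"
proof (cases "t > 0")
  case True
  have "\<bar>phi m t\<bar> = \<bar>poly (P m) (inverse t)\<bar> * exp (- inverse t)"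
    using True by (simp add: phi_def abs_mult)
  also have "\<dots> \<le> \<bar>poly (P m) (inverse t)\<bar> * 1"
    using True by (intro mult_left_mono) auto
  also have "\<dots> \<le> pn (P m) * max 1 (inverse t) ^ (2 * m)"
    using True degree_P by (simp add: poly_bound)
  also have "\<dots> \<le> (2 * real m + 1) ^ m * max 1 (inverse t) ^ (2 * m)"
    by (intro mult_right_mono pn_P) auto
  finally show ?thesis .
qed (simp add: phi_def)


fun c :: "nat \<Rightarrow> nat \<Rightarrow> real" where
  "c 0 k = (if k = 0 then 1 else 0)"
| "c (Suc 0) k = (if k = 0 then 1 else if k = 1 then 1/2 else 0)"
| "c (Suc (Suc n)) k = 2 * c (Suc n) k + (if k = 0 then 0 else c (Suc n) (k - 1)) - c n k"

lemma c_zero: "n < k \<Longrightarrow> c n k = 0"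
  by (induction n k rule: c.induct) auto

lemma c_bound: "\<bar>c n k\<bar> \<le> 4 ^ n"
proof (induction n k rule: c.induct)
  case (3 n k)
  have a: "\<bar>c (Suc n) k\<bar> \<le> 4 ^ Suc n" using 3 by simp
  have b: "\<bar>(if k = 0 then 0 else c (Suc n) (k - 1))\<bar> \<le> 4 ^ Suc n" using 3 by auto
  have "\<bar>c (Suc (Suc n)) k\<bar> \<le> 2 * \<bar>c (Suc n) k\<bar> + \<bar>(if k = 0 then 0 else c (Suc n) (k - 1))\<bar> + \<bar>c n k\<bar>"
    by simp
  also have "\<dots> \<le> 2 * 4 ^ Suc n + 4 ^ Suc n + 4 ^ n" using a b 3 by linarith
  also have "\<dots> \<le> 4 ^ Suc (Suc n)" by simp
  finally show ?case .
qed auto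

definition U :: "nat \<Rightarrow> real \<Rightarrow> real" where
  "U n t = (\<Sum>k\<le>n. c n k * phi (2 * k) t)"
definition V :: "nat \<Rightarrow> real \<Rightarrow> real" where
  "V n t = (\<Sum>k\<le>n. c n k * phi (2 * k + 1) t)"
definition W :: "nat \<Rightarrow> real \<Rightarrow> real" where
  "W n t = (\<Sum>k\<le>n. c n k * phi (2 * k + 2) t)"

lemma U_deriv: "(U n has_real_derivative V n t) (at t)"
  unfolding U_def V_def
  by (intro DERIV_sum DERIV_cmult) (simp add: phi_deriv)

lemma V_deriv: "(V n has_real_derivative W n t) (at t)"
  unfolding V_def W_def
  by (intro DERIV_sum DERIV_cmult) (simp add: phi_deriv)

lemma phi_cont: "continuous_on UNIV (phi m)"
  by (intro continuous_at_imp_continuous_on ballI DERIV_isCont[OF phi_deriv])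

lemma W_cont: "continuous_on UNIV (W n)"
  unfolding W_def by (intro continuous_intros phi_cont[THEN continuous_on_subset]) auto

lemma U_ext: "n \<le> N \<Longrightarrow> U n t = (\<Sum>k\<le>N. c n k * phi (2 * k) t)"
  unfolding U_def by (rule sum.mono_neutral_left) (auto simp: c_zero)

lemma W_shift: "W n t = (\<Sum>k\<le>Suc n. (if k = 0 then 0 else c n (k - 1)) * phi (2 * k) t)"
  unfolding W_def by (subst sum.atMost_Suc_shift) (simp add: algebra_simps)

lemma lap_pos: "W (Suc m) t = U (Suc (Suc m)) t + U m t - 2 * U (Suc m) t"
proof -
  have "U (Suc (Suc m)) t + U m t - 2 * U (Suc m) t =
     (\<Sum>k\<le>Suc (Suc m). (c (Suc (Suc m)) k + c m k - 2 * c (Suc m) k) * phi (2 * k) t)"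
    by (simp add: U_ext[of m "Suc (Suc m)"] U_ext[of "Suc m" "Suc (Suc m)"] U_def
        sum.distrib sum_subtractf sum_distrib_left algebra_simps c_zero)
  also have "\<dots> = W (Suc m) t"
    by (simp add: W_shift)
  finally show ?thesis by simp
qed

lemma lap_zero: "W 0 t = U 1 t + U 1 t - 2 * U 0 t"
  by (simp add: W_def U_def numeral_2_eq_2)


lemma asymp_aux:
  fixes e a :: real assumes "e > 0"
  shows "((\<lambda>x::real. exp (a * x - e * x * ln x)) \<longlongrightarrow> 0) at_top"
  using assms by real_asymp

lemma U_bound1:
  fixes t :: real
  defines "S \<equiv> max 1 (inverse t)"
  shows "\<bar>U n t\<bar> \<le> (real n + 1) * (4 ^ n * ((4 * real n + 1) ^ (2 * n) * S ^ (4 * n)))"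
proof -
  have S1: "S \<ge> 1" by (simp add: S_def)
  have "\<bar>U n t\<bar> \<le> (\<Sum>k\<le>n. \<bar>c n k * phi (2 * k) t\<bar>)"
    unfolding U_def by (rule sum_abs)
  also have "\<dots> \<le> (\<Sum>k\<le>n. 4 ^ n * ((4 * real n + 1) ^ (2 * n) * S ^ (4 * n)))"
  proof (rule sum_mono)
    fix k assume k: "k \<in> {..n}"
    have "\<bar>phi (2 * k) t\<bar> \<le> (2 * real (2 * k) + 1) ^ (2 * k) * S ^ (2 * (2 * k))"
      unfolding S_def by (rule phi_bound)
    also have "\<dots> \<le> (4 * real n + 1) ^ (2 * n) * S ^ (4 * n)"
    proof (intro mult_mono)
      have "(2 * real (2 * k) + 1) ^ (2 * k) \<le> (4 * real n + 1) ^ (2 * k)"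
        using k by (intro power_mono) auto
      also have "\<dots> \<le> (4 * real n + 1) ^ (2 * n)"
        using k by (intro power_increasing) auto
      finally show "(2 * real (2 * k) + 1) ^ (2 * k) \<le> (4 * real n + 1) ^ (2 * n)" .
      show "S ^ (2 * (2 * k)) \<le> S ^ (4 * n)"
        using k S1 by (intro power_increasing) auto
    qed (use S1 in auto)
    finally have "\<bar>phi (2 * k) t\<bar> \<le> (4 * real n + 1) ^ (2 * n) * S ^ (4 * n)" .
    then show "\<bar>c n k * phi (2 * k) t\<bar> \<le> 4 ^ n * ((4 * real n + 1) ^ (2 * n) * S ^ (4 * n))"
      unfolding abs_mult by (intro mult_mono c_bound) auto
  qed
  also have "\<dots> = (real n + 1) * (4 ^ n * ((4 * real n + 1) ^ (2 * n) * S ^ (4 * n)))"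
    by simp
  finally show ?thesis .
qed

lemma U_bound2:
  fixes t :: real
  defines "S \<equiv> max 1 (inverse t)"
  assumes n: "n \<ge> 1"
  shows "\<bar>U n t\<bar> \<le> (200 * S ^ 4) ^ n * real n ^ (2 * n)"
proof -
  have S1: "S \<ge> 1" by (simp add: S_def)
  have a: "real n + 1 \<le> 2 ^ n"
  proof -
    have "n + 1 \<le> 2 ^ n" using less_exp[of n] by linarith
    then have "real (n + 1) \<le> real (2 ^ n)" by (simp only: of_nat_le_iff)
    then show ?thesis by simp
  qed
  have b: "(4 * real n + 1) ^ (2 * n) \<le> (5 * real n) ^ (2 * n)"
    using n by (intro power_mono) auto
  have "\<bar>U n t\<bar> \<le> (real n + 1) * (4 ^ n * ((4 * real n + 1) ^ (2 * n) * S ^ (4 * n)))"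
    unfolding S_def by (rule U_bound1)
  also have "\<dots> \<le> 2 ^ n * (4 ^ n * ((5 * real n) ^ (2 * n) * S ^ (4 * n)))"
    using a b S1 by (intro mult_mono) auto
  also have "\<dots> = (200 * S ^ 4) ^ n * real n ^ (2 * n)"
  proof -
    have h1: "(5 * real n) ^ (2 * n) = 25 ^ n * real n ^ (2 * n)"
      by (simp add: power_mult_distrib power_mult)
    have h2: "S ^ (4 * n) = (S ^ 4) ^ n" by (simp add: power_mult)
    have h3: "(200::real) ^ n = 2 ^ n * 4 ^ n * 25 ^ n" by (simp flip: power_mult_distrib)
    show ?thesis unfolding h1 h2 power_mult_distrib[of 200] h3 by (simp add: algebra_simps)
  qed
  finally show ?thesis .
qed

lemma U_growth:
  fixes t e :: real
  assumes e: "e > 0"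
  shows "((\<lambda>n. \<bar>U n t\<bar> * exp (- (2 + e) * real n * ln (real n))) \<longlongrightarrow> 0) sequentially"
proof -
  define A where "A = 200 * (max 1 (inverse t)) ^ 4"
  have A: "A > 0" by (simp add: A_def)
  have g: "((\<lambda>n. exp (ln A * real n - e * real n * ln (real n))) \<longlongrightarrow> 0) sequentially"
    using filterlim_compose[OF asymp_aux[OF e, of "ln A"] filterlim_real_sequentially] by simp
  show ?thesis
  proof (rule Lim_null_comparison[OF _ g])
    show "\<forall>\<^sub>F n in sequentially. norm (\<bar>U n t\<bar> * exp (- (2 + e) * real n * ln (real n)))
        \<le> exp (ln A * real n - e * real n * ln (real n))"
      using eventually_ge_at_top[of "1::nat"]
    proof eventually_elim
      case (elim n)
      have "norm (\<bar>U n t\<bar> * exp (- (2 + e) * real n * ln (real n)))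
          = \<bar>U n t\<bar> * exp (- (2 + e) * real n * ln (real n))" by simp
      also have "\<dots> \<le> (A ^ n * real n ^ (2 * n)) * exp (- (2 + e) * real n * ln (real n))"
        using U_bound2[OF elim, of t] by (intro mult_right_mono) (auto simp: A_def)
      also have "A ^ n = exp (real n * ln A)"
        using A by (simp add: exp_of_nat_mult)
      also have "real n ^ (2 * n) = exp (real (2 * n) * ln (real n))"
        by (simp only: exp_of_nat_mult) (use elim in simp)
      also have "exp (real n * ln A) * exp (real (2 * n) * ln (real n)) * exp (- (2 + e) * real n * ln (real n))
          = exp (ln A * real n - e * real n * ln (real n))"
        by (simp add: exp_add[symmetric] algebra_simps)
      finally show ?case .
    qed
  qed
qed


lemma U0: "U 0 t = phi 0 t"
  by (simp add: U_def)

lemma not_analytic: "\<not> real_analytic_on (phi 0) UNIV"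
proof
  assume "real_analytic_on (phi 0) UNIV"
  then obtain r a where r: "r > 0" and
    sm0: "\<And>y. \<bar>y - 0\<bar> < r \<Longrightarrow> (\<lambda>n. a n * (y - 0) ^ n) sums phi 0 y"
    unfolding real_analytic_on_def by blast
  have sm: "\<And>y. \<bar>y\<bar> < r \<Longrightarrow> (\<lambda>n. a n * y ^ n) sums phi 0 y"
    using sm0 by simp
  have all0: "a k = 0" for k
  proof (induction k rule: less_induct)
    case (less k)
    define F where "F y = phi 0 y / y ^ k" for y
    have sk: "(\<lambda>n. a (n + k) * y ^ n) sums F y" if y: "y \<noteq> 0" "norm y < r" for y
    proof -
      have "(\<lambda>n. a n * y ^ n) sums phi 0 y" using sm y by simp
      from sums_split_initial_segment[OF this, of k]
      have "(\<lambda>i. a (i + k) * y ^ (i + k)) sums (phi 0 y)"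
        using less.IH by simp
      from sums_divide[OF this, of "y ^ k"]
      have "(\<lambda>i. a (i + k) * y ^ (i + k) / y ^ k) sums F y" by (simp add: F_def)
      moreover have "(\<lambda>i. a (i + k) * y ^ (i + k) / y ^ k) = (\<lambda>i. a (i + k) * y ^ i)"
        using y by (auto simp: power_add fun_eq_iff)
      ultimately show ?thesis by simp
    qed
    have "(F \<longlongrightarrow> a (0 + k)) (at 0)"
      by (rule powser_limit_0_strong[OF r]) (use sk in auto)
    hence "(F \<longlongrightarrow> a k) (at 0)" by simp
    hence l1: "(F \<longlongrightarrow> a k) (at_left 0)"
        by (rule filterlim_at_split[THEN iffD1, THEN conjunct1])
    have l2: "(F \<longlongrightarrow> 0) (at_left 0)"
      by (rule tendsto_eventually) (use ev_left in \<open>eventually_elim, simp add: F_def phi_def\<close>)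
    show ?case using tendsto_unique[OF trivial_limit_at_left_real l1 l2] .
  qed
  have "(\<lambda>n. a n * (r/2) ^ n) sums phi 0 (r/2)" using sm r by simp
  hence "(\<lambda>n. 0::real) sums phi 0 (r/2)" using all0 by simp
  hence "phi 0 (r/2) = 0" using sums_zero sums_unique2 by blast
  moreover have "phi 0 (r/2) > 0" using r by (simp add: phi_def)
  ultimately show False by simp
qed

lemma int_lim:
  assumes h: "(h \<longlongrightarrow> (0::real)) sequentially"
  shows "((\<lambda>x::int. h (nat \<bar>x\<bar>)) \<longlongrightarrow> 0) at_top \<and> ((\<lambda>x::int. h (nat \<bar>x\<bar>)) \<longlongrightarrow> 0) at_bot"
proof
  have "((\<lambda>x::int. h (nat x)) \<longlongrightarrow> 0) at_top"
    by (rule filterlim_compose[OF h filterlim_nat_sequentially])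
  then show "((\<lambda>x::int. h (nat \<bar>x\<bar>)) \<longlongrightarrow> 0) at_top"
    by (rule Lim_transform_eventually) (use eventually_ge_at_top[of "0::int"] in \<open>eventually_elim, simp\<close>)
  have "((\<lambda>x::int. h (nat (- x))) \<longlongrightarrow> 0) at_bot"
  proof (rule filterlim_compose[OF h])
    show "filterlim (\<lambda>x::int. nat (-x)) sequentially at_bot"
      unfolding filterlim_at_top
    proof
      fix Z :: nat
      show "eventually (\<lambda>x::int. Z \<le> nat (-x)) at_bot"
        using eventually_le_at_bot[of "- int Z"] by eventually_elim auto
    qed
  qed
  then show "((\<lambda>x::int. h (nat \<bar>x\<bar>)) \<longlongrightarrow> 0) at_bot"
    by (rule Lim_transform_eventually) (use eventually_le_at_bot[of "0::int"] in \<open>eventually_elim, simp\<close>)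
qed

lemma lap_all: "W (nat \<bar>x\<bar>) t = line_laplacian (\<lambda>y. U (nat \<bar>y\<bar>) t) x"
proof -
  consider "x = 0" | "x > 0" | "x < 0" by linarith
  then show ?thesis
  proof cases
    case 1 then show ?thesis by (simp add: line_laplacian_def lap_zero)
  next
    case 2
    define m where "m = nat (x - 1)"
    have "nat \<bar>x\<bar> = Suc m" "nat \<bar>x + 1\<bar> = Suc (Suc m)" "nat \<bar>x - 1\<bar> = m"
      using 2 by (simp_all add: m_def)
    then show ?thesis by (simp add: line_laplacian_def lap_pos)
  next
    case 3
    define m where "m = nat (- x - 1)"
    have "nat \<bar>x\<bar> = Suc m" "nat \<bar>x - 1\<bar> = Suc (Suc m)" "nat \<bar>x + 1\<bar> = m"
      using 3 by (simp_all add: m_def)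
    then show ?thesis by (simp add: line_laplacian_def lap_pos)
  qed
qed

theorem theorem3p1:
  fixes \<epsilon> :: real
  assumes "\<epsilon> > 0"
  shows "\<exists>u :: real \<Rightarrow> int \<Rightarrow> real.
    (\<forall>x. \<exists>u1 u2 :: real \<Rightarrow> real.
        (\<forall>t. ((\<lambda>s. u s x) has_real_derivative u1 t) (at t)) \<and>
        (\<forall>t. (u1 has_real_derivative u2 t) (at t)) \<and>
        continuous_on UNIV u2 \<and>
        (\<forall>t. u2 t = line_laplacian (u t) x) \<and>
        u 0 x = 0 \<and> u1 0 = 0) \<and>
    (\<exists>t x. u t x \<noteq> 0) \<and>
    \<not> real_analytic_on (\<lambda>t. u t 0) UNIV \<and>
    (\<forall>t. ((\<lambda>x::int. \<bar>u t x\<bar> * exp (- (2 + \<epsilon>) * real_of_int \<bar>x\<bar> * ln (real_of_int \<bar>x\<bar>)))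
            \<longlongrightarrow> 0) at_top \<and>
         ((\<lambda>x::int. \<bar>u t x\<bar> * exp (- (2 + \<epsilon>) * real_of_int \<bar>x\<bar> * ln (real_of_int \<bar>x\<bar>)))
            \<longlongrightarrow> 0) at_bot)"
proof (intro exI[of _ "\<lambda>t x. U (nat \<bar>x\<bar>) t"] conjI allI)
  fix x :: int
  show "\<exists>u1 u2 :: real \<Rightarrow> real.
        (\<forall>t. ((\<lambda>s. U (nat \<bar>x\<bar>) s) has_real_derivative u1 t) (at t)) \<and>
        (\<forall>t. (u1 has_real_derivative u2 t) (at t)) \<and>
        continuous_on UNIV u2 \<and>
        (\<forall>t. u2 t = line_laplacian (\<lambda>y. U (nat \<bar>y\<bar>) t) x) \<and>
        U (nat \<bar>x\<bar>) 0 = 0 \<and> u1 0 = 0"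
    by (intro exI[of _ "V (nat \<bar>x\<bar>)"] exI[of _ "W (nat \<bar>x\<bar>)"] conjI allI U_deriv V_deriv W_cont lap_all)
       (simp_all add: U_def V_def phi_def)
next
  show "\<exists>t x. U (nat \<bar>x\<bar>) t \<noteq> 0"
    by (intro exI[of _ 1] exI[of _ 0]) (simp add: U0 phi_def)
next
  show "\<not> real_analytic_on (\<lambda>t. U (nat \<bar>0::int\<bar>) t) UNIV"
    using not_analytic by (simp add: U0)
next
  fix t :: real
  have *: "\<And>x::int. \<bar>U (nat \<bar>x\<bar>) t\<bar> * exp (- (2 + \<epsilon>) * real_of_int \<bar>x\<bar> * ln (real_of_int \<bar>x\<bar>))
     = (\<lambda>n. \<bar>U n t\<bar> * exp (- (2 + \<epsilon>) * real n * ln (real n))) (nat \<bar>x\<bar>)"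
    by simp
  show "((\<lambda>x::int. \<bar>U (nat \<bar>x\<bar>) t\<bar> * exp (- (2 + \<epsilon>) * real_of_int \<bar>x\<bar> * ln (real_of_int \<bar>x\<bar>))) \<longlongrightarrow> 0) at_top"
    unfolding * using int_lim[OF U_growth[OF assms]] by blast
  show "((\<lambda>x::int. \<bar>U (nat \<bar>x\<bar>) t\<bar> * exp (- (2 + \<epsilon>) * real_of_int \<bar>x\<bar> * ln (real_of_int \<bar>x\<bar>))) \<longlongrightarrow> 0) at_bot"
    unfolding * using int_lim[OF U_growth[OF assms]] by blast
qed

end
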